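(* Let $r\ge 2$ and $m\ge 7$ be integers. Then for every integer $n\ge m-1$, $$F_{n+2^{m-6},r}\equiv F_{n,r}\pmod{2^m},$$ i.e. from the term of index $m-1$ onward the sequence $(F_{n,r}\bmod 2^m)_{n\ge0}$ is periodic with period $2^{m-6}$.
   Context: For positive integers $r\le m\le n$, $S_r(n,m)$ denotes the $r$-Stirling number of the second kind: the number of partitions of $\{1,\dots,n\}$ into $m$ non-empty blocks such that $1,\dots,r$ lie in pairwise distinct blocks. For a positive integer $r$ and integer $n\ge 0$, the $r$-Fubini number is $F_{n,r}=\sum_{k=0}^{n}(k+r)!\,S_r(n+r,k+r)$. *)

theory Defs
  imports Main "HOL-Library.Disjoint_Sets"
begin

definition r_stirling :: "nat \<Rightarrow> nat \<Rightarrow> nat \<Rightarrow> nat" where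
  "r_stirling r n m = card {P. partition_on {1..n} P \<and> card P = m \<and>
     (\<forall>B\<in>P. \<forall>i\<in>{1..r}. \<forall>j\<in>{1..r}. i \<in> B \<and> j \<in> B \<longrightarrow> i = j)}"

definition r_fubini :: "nat \<Rightarrow> nat \<Rightarrow> nat" where
  "r_fubini n r = (\<Sum>k=0..n. fact (k + r) * r_stirling r (n + r) (k + r))"

end

theory Submission
  imports Defs
begin


definition Dif :: "(int \<Rightarrow> int) \<Rightarrow> int \<Rightarrow> int" where
  "Dif f = (\<lambda>x. f (x+1) - f x)"

fun ff :: "int \<Rightarrow> nat \<Rightarrow> int" where
  "ff x 0 = 1"
| "ff x (Suc j) = ff x j * (x - int j)"

lemma ff_shift: "ff (x+1) (Suc j) = (x+1) * ff x j"
proof (induction j)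
  case 0 then show ?case by simp
next
  case (Suc j)
  have "ff (x+1) (Suc (Suc j)) = ff (x+1) (Suc j) * (x + 1 - int (Suc j))" by simp
  also have "\<dots> = (x+1) * (ff x j * (x - int j))" using Suc by simp
  finally show ?case by simp
qed

lemma ff_zero: "j < k \<Longrightarrow> ff (int j) k = 0"
proof (induction k)
  case 0 then show ?case by simp
next
  case (Suc k)
  then show ?case by (cases "j = k") auto
qed

lemma ff_fact: "ff (int k) k = fact k"
proof (induction k)
  case 0 then show ?case by simp
next
  case (Suc k)
  have "ff (int k + 1) (Suc k) = (int k + 1) * ff (int k) k" by (rule ff_shift)
  then show ?case using Suc by (simp add: fact_Suc add.commute)
qed

lemma ff_0: "ff 0 t = (if t = 0 then 1 else 0)"
  by (induction t) auto

lemma Dif_ff: "(Dif ^^ k) (\<lambda>x. ff x j) = (\<lambda>x. ff (int j) k * ff x (j - k))"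
proof (induction k)
  case 0 then show ?case by simp
next
  case (Suc k)
  show ?case
  proof (cases "j - k")
    case 0
    then have "j \<le> k" by simp
    have z: "ff (int j) (Suc k) = 0"
      using \<open>j \<le> k\<close> by (cases "j = k") (auto simp: ff_zero)
    show ?thesis
    proof (cases "j = k")
      case True then show ?thesis using Suc 0 z by (simp add: Dif_def)
    next
      case False then have "ff (int j) k = 0" using \<open>j \<le> k\<close> by (simp add: ff_zero)
      then show ?thesis using Suc 0 z by (simp add: Dif_def)
    qed
  next
    case (Suc t)
    then have jk: "j - Suc k = t" "int j - int k = int (Suc t)" by auto
    have "(Dif ^^ Suc k) (\<lambda>x. ff x j) = Dif (\<lambda>x. ff (int j) k * ff x (Suc t))"
      using Suc.IH \<open>j - k = Suc t\<close> by simp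
    also have "\<dots> = (\<lambda>x. ff (int j) k * (int (Suc t) * ff x t))"
      by (auto simp: Dif_def ff_shift algebra_simps simp del: ff.simps(2) intro!: ext)
         (simp add: algebra_simps)
    finally show ?thesis using jk by (simp add: algebra_simps)
  qed
qed

lemma Dif_sum: "(Dif ^^ k) (\<lambda>x. \<Sum>j\<in>A. c j * g j x) = (\<lambda>x. \<Sum>j\<in>A. c j * (Dif ^^ k) (g j) x)"
proof (induction k)
  case 0 then show ?case by simp
next
  case (Suc k)
  then show ?case
    by (simp add: Dif_def sum_subtractf[symmetric] right_diff_distrib)
qed

lemma Dif_shift: "(Dif ^^ k) (\<lambda>x. f (x + c)) = (\<lambda>x. (Dif ^^ k) f (x + c))"
proof (induction k)
  case 0 then show ?case by simp
next
  case (Suc k)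
  then show ?case by (simp add: Dif_def algebra_simps)
qed

definition Lam :: "nat \<Rightarrow> (int \<Rightarrow> int) \<Rightarrow> int" where
  "Lam N f = (\<Sum>k\<le>N. (Dif ^^ k) f 0)"

lemma Lam_step:
  assumes z: "(Dif ^^ Suc N) f = (\<lambda>_. 0)"
  shows "Lam N f = 2 * Lam N (\<lambda>x. f (x + (-1))) - f (-1)"
proof -
  define g where "g = (\<lambda>x. f (x + (-1)))"
  have gk: "(Dif ^^ k) g = (\<lambda>x. (Dif ^^ k) f (x + (-1)))" for k
    unfolding g_def by (rule Dif_shift)
  have a: "(Dif ^^ k) f 0 = (Dif ^^ k) g 0 + (Dif ^^ Suc k) g 0" for k
    by (simp add: gk Dif_def)
  have "Lam N f = (\<Sum>k\<le>N. (Dif ^^ k) g 0) + (\<Sum>k\<le>N. (Dif ^^ Suc k) g 0)"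
    unfolding Lam_def a by (simp add: sum.distrib)
  also have "(\<Sum>k\<le>N. (Dif ^^ Suc k) g 0) = (\<Sum>k\<le>Suc N. (Dif ^^ k) g 0) - g 0"
  proof -
    have "(\<Sum>k\<le>Suc N. (Dif ^^ k) g 0) = (Dif ^^ 0) g 0 + (\<Sum>k\<le>N. (Dif ^^ Suc k) g 0)"
      by (rule sum.atMost_Suc_shift)
    then show ?thesis by simp
  qed
  also have "(\<Sum>k\<le>Suc N. (Dif ^^ k) g 0) = (\<Sum>k\<le>N. (Dif ^^ k) g 0) + (Dif ^^ Suc N) g 0"
    by (rule sum.atMost_Suc)
  also have "(Dif ^^ Suc N) g 0 = 0"
    using z by (simp only: gk)
  finally show ?thesis unfolding Lam_def g_def by simp
qed

lemma Lam_iter: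
  assumes z: "(Dif ^^ Suc N) f = (\<lambda>_. 0)"
  shows "Lam N f = 2 ^ K * Lam N (\<lambda>x. f (x - int K)) - (\<Sum>k\<in>{1..K}. 2 ^ (k - 1) * f (- int k))"
proof (induction K)
  case 0 then show ?case by simp
next
  case (Suc K)
  have zK: "(Dif ^^ Suc N) (\<lambda>x. f (x + (- int K))) = (\<lambda>_. 0)"
    by (simp only: Dif_shift z)
  have "Lam N (\<lambda>x. f (x + (- int K))) = 2 * Lam N (\<lambda>x. f (x + (-1) + (- int K))) - f (-1 + (- int K))"
    using Lam_step[OF zK] by simp
  then have e: "Lam N (\<lambda>x. f (x - int K)) = 2 * Lam N (\<lambda>x. f (x - int (Suc K))) - f (- int (Suc K))"
    by (simp add: algebra_simps)
  show ?case using Suc e by (simp add: algebra_simps)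
qed

lemma Lam_cong:
  assumes z: "(Dif ^^ Suc N) f = (\<lambda>_. 0)"
  shows "(2::int) ^ K dvd Lam N f + (\<Sum>k\<in>{1..K}. 2 ^ (k - 1) * f (- int k))"
proof -
  have "Lam N f - (- (\<Sum>k\<in>{1..K}. 2 ^ (k - 1) * f (- int k))) = 2 ^ K * Lam N (\<lambda>x. f (x - int K))"
    using Lam_iter[OF z, of K] by simp
  then show ?thesis by simp
qed


fun cc :: "nat \<Rightarrow> nat \<Rightarrow> nat \<Rightarrow> int" where
  "cc r 0 j = (if j = r then 1 else 0)"
| "cc r (Suc n) 0 = 0"
| "cc r (Suc n) (Suc j) = int (Suc j) * cc r n (Suc j) + cc r n j"

lemma cc_big: "n + r < j \<Longrightarrow> cc r n j = 0"
proof (induction n arbitrary: j)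
  case 0 then show ?case by simp
next
  case (Suc n)
  then show ?case by (cases j) auto
qed

lemma cc_small: "j < r \<Longrightarrow> cc r n j = 0"
proof (induction n arbitrary: j)
  case 0 then show ?case by simp
next
  case (Suc n)
  then show ?case by (cases j) auto
qed

lemma ff_Suc_mult: "x * ff x j = ff x (Suc j) + int j * ff x j"
  by (simp add: algebra_simps)

lemma f_repr: "n + r \<le> M \<Longrightarrow> x ^ n * ff x r = (\<Sum>j\<le>M. cc r n j * ff x j)"
proof (induction n arbitrary: M)
  case 0
  have "(\<Sum>j\<le>M. cc r 0 j * ff x j) = (\<Sum>j\<le>M. if j = r then ff x j else 0)"
    by (rule sum.cong) auto
  also have "\<dots> = ff x r" using 0 by (simp add: sum.delta)
  finally show ?case by simp
next
  case (Suc n)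
  then obtain M' where M: "M = Suc M'" "n + r \<le> M'" by (cases M) auto
  have IH: "x ^ n * ff x r = (\<Sum>j\<le>M'. cc r n j * ff x j)" using Suc.IH M by simp
  have "x ^ Suc n * ff x r = (\<Sum>j\<le>M'. cc r n j * (x * ff x j))"
    using IH by (simp add: sum_distrib_left algebra_simps)
  also have "\<dots> = (\<Sum>j\<le>M'. cc r n j * ff x (Suc j)) + (\<Sum>j\<le>M'. int j * cc r n j * ff x j)"
    unfolding sum.distrib[symmetric] by (rule sum.cong) (simp_all add: algebra_simps)
  also have "(\<Sum>j\<le>M'. int j * cc r n j * ff x j) = (\<Sum>j\<le>M'. int (Suc j) * cc r n (Suc j) * ff x (Suc j))"
  proof -
    have "(\<Sum>j\<le>Suc M'. int j * cc r n j * ff x j) = 0 + (\<Sum>j\<le>M'. int (Suc j) * cc r n (Suc j) * ff x (Suc j))"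
      by (subst sum.atMost_Suc_shift) simp
    moreover have "(\<Sum>j\<le>Suc M'. int j * cc r n j * ff x j) = (\<Sum>j\<le>M'. int j * cc r n j * ff x j)"
      using M by (simp add: cc_big)
    ultimately show ?thesis by simp
  qed
  also have "(\<Sum>j\<le>M'. cc r n j * ff x (Suc j)) + (\<Sum>j\<le>M'. int (Suc j) * cc r n (Suc j) * ff x (Suc j))
      = (\<Sum>j\<le>M'. cc r (Suc n) (Suc j) * ff x (Suc j))"
    by (simp add: sum.distrib[symmetric] algebra_simps)
  also have "\<dots> = (\<Sum>j\<le>M. cc r (Suc n) j * ff x j)"
  proof -
    have "(\<Sum>j\<le>Suc M'. cc r (Suc n) j * ff x j) = cc r (Suc n) 0 * ff x 0 + (\<Sum>j\<le>M'. cc r (Suc n) (Suc j) * ff x (Suc j))"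
      by (rule sum.atMost_Suc_shift)
    then show ?thesis using M(1) by simp
  qed
  finally show ?case .
qed

lemma Dif_f:
  assumes "n + r \<le> M"
  shows "(Dif ^^ k) (\<lambda>x. x ^ n * ff x r) = (\<lambda>x. \<Sum>j\<le>M. cc r n j * (ff (int j) k * ff x (j - k)))"
proof -
  have "(\<lambda>x. x ^ n * ff x r) = (\<lambda>x. \<Sum>j\<le>M. cc r n j * ff x j)"
    using f_repr[OF assms] by auto
  then show ?thesis by (simp add: Dif_sum Dif_ff)
qed

lemma Dif_f_vanish:
  assumes "n + r \<le> N"
  shows "(Dif ^^ Suc N) (\<lambda>x. x ^ n * ff x r) = (\<lambda>_. 0)"
  unfolding Dif_f[OF assms] by (auto intro!: ext sum.neutral simp: ff_zero)

lemma Lam_f: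
  assumes "n + r \<le> N"
  shows "Lam N (\<lambda>x. x ^ n * ff x r) = (\<Sum>j\<le>N. cc r n j * fact j)"
proof -
  have "(Dif ^^ k) (\<lambda>x. x ^ n * ff x r) 0 = cc r n k * fact k" if "k \<le> N" for k
  proof -
    have "(Dif ^^ k) (\<lambda>x. x ^ n * ff x r) 0 = (\<Sum>j\<le>N. if j = k then cc r n k * fact k else 0)"
      unfolding Dif_f[OF assms]
    proof (rule sum.cong)
      fix j assume "j \<in> {..N}"
      show "cc r n j * (ff (int j) k * ff 0 (j - k)) = (if j = k then cc r n k * fact k else 0)"
        by (cases "j < k") (auto simp: ff_zero ff_0 ff_fact)
    qed simp
    also have "\<dots> = cc r n k * fact k" using that by (simp add: sum.delta)
    finally show ?thesis .
  qed
  then show ?thesis unfolding Lam_def by (intro sum.cong) auto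
qed



lemma ff_dvd: "a \<le> b \<Longrightarrow> ff x a dvd ff x b"
proof (induction b)
  case 0 then show ?case by simp
next
  case (Suc b)
  then show ?case by (cases "a = Suc b") (auto intro: dvd_mult2)
qed

lemma odd_pow_dvd: "odd (k::int) \<Longrightarrow> 2 ^ t * (k^2 - 1) dvd k ^ (2 ^ (t+1)) - 1"
proof (induction t)
  case 0 then show ?case by simp
next
  case (Suc t)
  have "(2::nat) ^ (Suc t + 1) = 2 ^ (t+1) * 2" by simp
  then have "k ^ (2 ^ (Suc t + 1)) = (k ^ (2 ^ (t+1)))^2" by (simp only: power_mult)
  then have e: "k ^ (2 ^ (Suc t + 1)) - 1 = (k ^ (2 ^ (t+1)) - 1) * (k ^ (2 ^ (t+1)) + 1)"
    by (simp add: algebra_simps power2_eq_square)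
  have "odd (k ^ (2 ^ (t+1)))" using Suc.prems by simp
  then have "2 dvd k ^ (2 ^ (t+1)) + 1" by simp
  then have "2 ^ t * (k^2 - 1) * 2 dvd (k ^ (2 ^ (t+1)) - 1) * (k ^ (2 ^ (t+1)) + 1)"
    using Suc by (intro mult_dvd_mono) auto
  then show ?case unfolding e by (simp add: algebra_simps)
qed

lemma key_odd:
  assumes "odd k" "s \<ge> 1"
  shows "(2::int) ^ (s+6) dvd 2 ^ (k-1) * 2 ^ (s-1) * ((int k)^2 - 1) * (int k + 1)"
proof (cases "k \<ge> 7")
  case True
  have "even ((int k)^2 - 1)" using assms by simp
  then obtain y where y: "(int k)^2 - 1 = 2 * y" by blast
  have eq: "(2::int) ^ (k-1) * 2 ^ (s-1) * ((int k)^2 - 1) * (int k + 1) = 2 ^ (k - 1 + (s - 1) + 1) * (y * (int k + 1))"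
    by (simp add: y power_add)
  have d: "(2::int) ^ (s+6) dvd 2 ^ (k - 1 + (s - 1) + 1)"
    using True assms by (intro le_imp_power_dvd) auto
  show ?thesis unfolding eq by (rule dvd_mult2[OF d])
next
  case False
  obtain s' where s: "s = Suc s'" using assms by (cases s) auto
  from False assms have "k = 1 \<or> k = 3 \<or> k = 5" by presburger
  then show ?thesis
  proof (elim disjE)
    assume "k = 1" then show ?thesis by simp
  next
    assume "k = 3"
    then have "(2::int) ^ (k-1) * 2 ^ (s-1) * ((int k)^2 - 1) * (int k + 1) = 2 ^ (s+6)"
      using s by (simp add: power_add)
    then show ?thesis by simp
  next
    assume "k = 5"
    then have "(2::int) ^ (k-1) * 2 ^ (s-1) * ((int k)^2 - 1) * (int k + 1) = 2 ^ (s+6) * 18"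
      using s by (simp add: power_add)
    then show ?thesis by simp
  qed
qed

lemma term_dvd:
  assumes r: "r \<ge> 2" and s: "s \<ge> 1" and n: "n + 1 \<ge> s + 6" and k: "k \<ge> 1"
  shows "(2::int) ^ (s+6) dvd 2 ^ (k-1) * ((- int k) ^ (n + 2^s) * ff (- int k) r - (- int k) ^ n * ff (- int k) r)"
proof -
  have ff2: "ff (- int k) 2 = int k * (int k + 1)"
    by (simp add: numeral_2_eq_2 algebra_simps)
  have "ff (- int k) 2 dvd ff (- int k) r" using r by (rule ff_dvd)
  then have dk: "int k * (int k + 1) dvd ff (- int k) r" using ff2 by simp
  have e: "(- int k) ^ (n + 2^s) * ff (- int k) r - (- int k) ^ n * ff (- int k) r
         = (- int k) ^ n * ((- int k) ^ (2^s) - 1) * ff (- int k) r"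
    by (simp add: power_add algebra_simps)
  show ?thesis
  proof (cases "even k")
    case True
    then obtain t where t: "int k = 2 * t" by (metis even_of_nat_iff evenE)
    have "- int k = 2 * (- t)" using t by simp
    then have "(- int k) ^ n = 2 ^ n * (- t) ^ n" by (simp only: power_mult_distrib)
    then have "(2::int) ^ n dvd (- int k) ^ n" by simp
    moreover have "(2::int) dvd int k" using t by simp
    then have "(2::int) dvd ff (- int k) r" using dk by (meson dvd_mult2 dvd_trans)
    ultimately have h1: "(2::int) ^ n * 2 dvd (- int k) ^ n * ((- int k) ^ (2^s) - 1) * ff (- int k) r"
      by (intro mult_dvd_mono) (auto intro: dvd_mult2)
    have h2: "(2::int) ^ (s+6) dvd 2 ^ n * 2"
    proof -
      have "(2::int) ^ (s+6) dvd 2 ^ (n+1)" using n by (intro le_imp_power_dvd) auto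
      then show ?thesis by (simp add: mult.commute)
    qed
    have "(2::int) ^ (s+6) dvd (- int k) ^ n * ((- int k) ^ (2^s) - 1) * ff (- int k) r"
      by (rule dvd_trans[OF h2 h1])
    then show ?thesis unfolding e by (rule dvd_mult)
  next
    case False
    have ev: "even ((2::nat) ^ s)" using s by simp
    have p: "(- int k) ^ (2^s) = int k ^ (2^s)" using ev by simp
    have "odd (int k)" using False by simp
    from odd_pow_dvd[OF this, of "s-1"] s
    have d1: "2 ^ (s-1) * ((int k)^2 - 1) dvd int k ^ (2^s) - 1" by simp
    have d2: "int k + 1 dvd ff (- int k) r" using dk by (meson dvd_triv_right dvd_trans)
    have "2 ^ (k-1) * (2 ^ (s-1) * ((int k)^2 - 1)) * (int k + 1) dvd
          2 ^ (k-1) * ((- int k) ^ n * ((- int k) ^ (2^s) - 1)) * ff (- int k) r"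
      unfolding p by (intro mult_dvd_mono d1 d2 dvd_mult dvd_refl) 
    moreover have "(2::int) ^ (s+6) dvd 2 ^ (k-1) * (2 ^ (s-1) * ((int k)^2 - 1)) * (int k + 1)"
      using key_odd[OF False s] by (simp only: mult.assoc)
    ultimately have "(2::int) ^ (s+6) dvd 2 ^ (k-1) * ((- int k) ^ n * ((- int k) ^ (2^s) - 1)) * ff (- int k) r"
      by (rule dvd_trans[rotated])
    then show ?thesis unfolding e by (simp only: mult.assoc)
  qed
qed



definition sepP :: "nat \<Rightarrow> nat set set \<Rightarrow> bool" where
  "sepP r P \<longleftrightarrow> (\<forall>B\<in>P. \<forall>i\<in>{1..r}. \<forall>j\<in>{1..r}. i \<in> B \<and> j \<in> B \<longrightarrow> i = j)"

definition V :: "nat \<Rightarrow> nat \<Rightarrow> nat \<Rightarrow> nat set set set" where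
  "V r N j = {P. partition_on {1..N} P \<and> card P = j \<and> sepP r P}"

lemma rs_V: "r_stirling r N j = card (V r N j)"
  unfolding r_stirling_def V_def sepP_def ..

lemma finite_V: "finite (V r N j)"
  by (rule finite_subset[OF _ finitely_many_partition_on[of "{1..N}"]]) (auto simp: V_def)

lemma base_iff: "partition_on {1..r} P \<and> sepP r P \<longleftrightarrow> P = (\<lambda>x. {x}) ` {1..r}"
proof
  assume h: "partition_on {1..r} P \<and> sepP r P"
  then have U: "\<Union>P = {1..r}" and ne: "{} \<notin> P" and sp: "sepP r P"
    by (auto simp: partition_on_def)
  have bl: "\<exists>x\<in>{1..r}. B = {x}" if BP: "B \<in> P" for B
  proof -
    obtain x where x: "x \<in> B" using ne BP by (metis all_not_in_conv)
    have sub: "B \<subseteq> {1..r}" using U BP by blast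
    have "y = x" if "y \<in> B" for y
      using sp \<open>B \<in> P\<close> x that sub unfolding sepP_def by blast
    then have "B = {x}" using x by blast
    then show ?thesis using x sub by blast
  qed
  show "P = (\<lambda>x. {x}) ` {1..r}"
  proof
    show "P \<subseteq> (\<lambda>x. {x}) ` {1..r}" using bl by blast
    show "(\<lambda>x. {x}) ` {1..r} \<subseteq> P"
    proof
      fix C assume "C \<in> (\<lambda>x. {x}) ` {1..r}"
      then obtain x where x: "x \<in> {1..r}" "C = {x}" by blast
      then obtain B where B: "B \<in> P" "x \<in> B" using U by blast
      then obtain y where "B = {y}" using bl by blast
      then show "C \<in> P" using B x by simp
    qed
  qed
next
  assume "P = (\<lambda>x. {x}) ` {1..r}"
  then show "partition_on {1..r} P \<and> sepP r P"
    by (auto simp: partition_on_singletons sepP_def)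
qed

lemma V_base: "V r r j = (if j = r then {(\<lambda>x. {x}) ` {1..r}} else {})"
proof -
  have c: "card ((\<lambda>x. {x}) ` {1..r}) = r"
    by (subst card_image) (auto simp: inj_on_def)
  have "V r r j = {P. P = (\<lambda>x. {x}) ` {1..r} \<and> card P = j}"
    unfolding V_def using base_iff[of r] by blast
  then show ?thesis using c by auto
qed

lemma V_Suc0: "V r (Suc N) 0 = {}"
proof -
  have False if "P \<in> V r (Suc N) 0" for P
  proof -
    have p: "partition_on {1..Suc N} P" "card P = 0" using that by (auto simp: V_def)
    have "finite P" using finite_elements[OF _ p(1)] by simp
    then have "P = {}" using p(2) by simp
    then show False using p(1) by (auto simp: partition_on_def)
  qed
  then show ?thesis by blast
qed


lemma H2:
  assumes Q: "Q \<in> V r N j" and rN: "r \<le> N"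
  shows "insert {Suc N} Q \<in> V r (Suc N) (Suc j)"
proof -
  have p: "partition_on {1..N} Q" "card Q = j" "sepP r Q" using Q by (auto simp: V_def)
  have U: "\<Union>Q = {1..N}" using p(1) by (auto simp: partition_on_def)
  have fin: "finite Q" using finite_elements[OF _ p(1)] by simp
  have nin: "{Suc N} \<notin> Q"
  proof
    assume "{Suc N} \<in> Q" then have "Suc N \<in> \<Union>Q" by blast
    then show False using U by simp
  qed
  have dj: "disjnt {Suc N} (\<Union>Q)" using U by (simp add: disjnt_def)
  have "{1..Suc N} - {Suc N} = {1..N}" by auto
  then have "partition_on {1..Suc N} (insert {Suc N} Q)"
    using p(1) unfolding partition_on_insert[OF dj] by simp
  moreover have "card (insert {Suc N} Q) = Suc j" using fin nin p(2) by simp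
  moreover have "sepP r (insert {Suc N} Q)" using p(3) unfolding sepP_def by blast
  ultimately show ?thesis by (simp add: V_def)
qed

lemma H3:
  assumes Q: "Q \<in> V r N (Suc j)" and X: "X \<in> Q" and rN: "r \<le> N"
  shows "insert (insert (Suc N) X) (Q - {X}) \<in> V r (Suc N) (Suc j)"
proof -
  have p: "partition_on {1..N} Q" "card Q = Suc j" "sepP r Q" using Q by (auto simp: V_def)
  have U: "\<Union>Q = {1..N}" and D: "disjoint Q" and ne: "{} \<notin> Q"
    using p(1) by (auto simp: partition_on_def)
  have fin: "finite Q" using finite_elements[OF _ p(1)] by simp
  have XU: "X \<subseteq> {1..N}" using U X by blast
  have XY: "X \<inter> Y = {}" if "Y \<in> Q" "Y \<noteq> X" for Y
    using D X that unfolding disjoint_def by blast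
  have dj: "disjnt (insert (Suc N) X) (\<Union>(Q - {X}))"
    unfolding disjnt_def
  proof (rule equals0I)
    fix z assume "z \<in> insert (Suc N) X \<inter> \<Union>(Q - {X})"
    then obtain Y where Y: "Y \<in> Q" "Y \<noteq> X" "z \<in> Y" "z = Suc N \<or> z \<in> X" by blast
    have "Y \<subseteq> {1..N}" using U Y(1) by blast
    then show False using Y XY[OF Y(1,2)] by auto
  qed
  have p2: "partition_on ({1..N} - X) (Q - {X})"
  proof (rule partition_onI)
    show "\<Union>(Q - {X}) = {1..N} - X"
    proof
      show "\<Union>(Q - {X}) \<subseteq> {1..N} - X"
      proof
        fix z assume "z \<in> \<Union>(Q - {X})"
        then obtain Y where Y: "Y \<in> Q" "Y \<noteq> X" "z \<in> Y" by blast
        have "z \<in> {1..N}" using U Y by blast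
        moreover have "z \<notin> X" using XY[OF Y(1,2)] Y(3) by blast
        ultimately show "z \<in> {1..N} - X" by blast
      qed
      show "{1..N} - X \<subseteq> \<Union>(Q - {X})"
      proof
        fix z assume z: "z \<in> {1..N} - X"
        then have "z \<in> \<Union>Q" using U by blast
        then obtain Y where "Y \<in> Q" "z \<in> Y" by blast
        then show "z \<in> \<Union>(Q - {X})" using z by blast
      qed
    qed
    show "disjnt p q" if "p \<in> Q - {X}" "q \<in> Q - {X}" "p \<noteq> q" for p q
      using D that unfolding disjoint_def disjnt_def by blast
    show "{} \<notin> Q - {X}" using ne by blast
  qed
  have e: "{1..Suc N} - insert (Suc N) X = {1..N} - X" by auto
  have "partition_on {1..Suc N} (insert (insert (Suc N) X) (Q - {X}))"
  proof -
    have "insert (Suc N) X \<subseteq> {1..Suc N}" "insert (Suc N) X \<noteq> {}" using XU by auto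
    then show ?thesis using p2 unfolding partition_on_insert[OF dj] e by blast
  qed
  moreover have "card (insert (insert (Suc N) X) (Q - {X})) = Suc j"
  proof -
    have "insert (Suc N) X \<notin> Q - {X}"
    proof
      assume "insert (Suc N) X \<in> Q - {X}" then have "Suc N \<in> \<Union>Q" by blast
      then show False using U by simp
    qed
    then show ?thesis using fin X p(2) by (simp add: card_Diff_singleton)
  qed
  moreover have "sepP r (insert (insert (Suc N) X) (Q - {X}))"
    unfolding sepP_def
  proof (intro ballI impI)
    fix B i i' assume B: "B \<in> insert (insert (Suc N) X) (Q - {X})" and i: "i \<in> {1..r}" "i' \<in> {1..r}"
      and ii: "i \<in> B \<and> i' \<in> B"
    show "i = i'"
    proof (cases "B = insert (Suc N) X")
      case True
      have "i \<noteq> Suc N" "i' \<noteq> Suc N" using i rN by auto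
      then have "i \<in> X" "i' \<in> X" using ii True by auto
      then show ?thesis using p(3) X i unfolding sepP_def by blast
    next
      case False
      then have "B \<in> Q" using B by blast
      then show ?thesis using p(3) ii i unfolding sepP_def by blast
    qed
  qed
  ultimately show ?thesis by (simp add: V_def)
qed


definition BM :: "nat \<Rightarrow> nat set set \<times> nat set \<Rightarrow> nat set set" where
  "BM a = (\<lambda>(Q,X). insert (insert a X) (Q - {X}))"

lemma H4:
  assumes P: "P \<in> V r (Suc N) (Suc j)" and rN: "r \<le> N"
  shows "P \<in> insert {Suc N} ` V r N j \<union> BM (Suc N) ` (SIGMA Q:V r N (Suc j). Q)"
proof -
  have p: "partition_on {1..Suc N} P" "card P = Suc j" "sepP r P" using P by (auto simp: V_def)
  have U: "\<Union>P = {1..Suc N}" and D: "disjoint P" and ne: "{} \<notin> P"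
    using p(1) by (auto simp: partition_on_def)
  have fin: "finite P" using finite_elements[OF _ p(1)] by simp
  have "Suc N \<in> \<Union>P" using U by simp
  then obtain B0 where B0: "B0 \<in> P" "Suc N \<in> B0" by blast
  define R where "R = P - {B0}"
  have PR: "P = insert B0 R" using B0 R_def by blast
  have B0R: "B0 \<notin> R" using R_def by blast
  have djB: "disjnt B0 (\<Union>R)"
    unfolding disjnt_def
  proof (rule equals0I)
    fix z assume "z \<in> B0 \<inter> \<Union>R"
    then obtain Y where Y: "Y \<in> P" "Y \<noteq> B0" "z \<in> Y" "z \<in> B0" unfolding R_def by blast
    then show False using D B0(1) unfolding disjoint_def by blast
  qed
  have pR: "partition_on ({1..Suc N} - B0) R"
    using p(1) unfolding PR partition_on_insert[OF djB] by blast
  have cR: "card R = j" using p(2) fin B0 unfolding R_def by (simp add: card_Diff_singleton)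
  have sR: "sepP r R" using p(3) unfolding R_def sepP_def by blast
  have B0sub: "B0 \<subseteq> {1..Suc N}" using U B0(1) by blast
  show ?thesis
  proof (cases "B0 = {Suc N}")
    case True
    have "{1..Suc N} - B0 = {1..N}" using True by auto
    then have "R \<in> V r N j" using pR cR sR by (simp add: V_def)
    moreover have "P = insert {Suc N} R" using PR True by simp
    ultimately show ?thesis by blast
  next
    case False
    define X where "X = B0 - {Suc N}"
    have Xne: "X \<noteq> {}" using False B0(2) unfolding X_def by blast
    have B0X: "B0 = insert (Suc N) X" using B0(2) unfolding X_def by blast
    have XU: "X \<subseteq> {1..N}" using B0sub unfolding X_def by auto
    have XR: "X \<notin> R"
    proof
      assume "X \<in> R"
      then have "X \<subseteq> \<Union>R" by blast
      moreover have "X \<subseteq> B0" unfolding X_def by blast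
      ultimately show False using djB Xne unfolding disjnt_def by blast
    qed
    have djX: "disjnt X (\<Union>R)" using djB unfolding X_def disjnt_def by blast
    have e: "{1..N} - X = {1..Suc N} - B0" using B0X XU by auto
    define Q where "Q = insert X R"
    have pQ: "partition_on {1..N} Q"
      unfolding Q_def partition_on_insert[OF djX] e using pR XU Xne by blast
    have finR: "finite R" using fin unfolding R_def by simp
    have cQ: "card Q = Suc j" unfolding Q_def using finR XR cR by simp
    have sQ: "sepP r Q" using sR p(3) B0(1) unfolding Q_def sepP_def X_def by blast
    have QV: "Q \<in> V r N (Suc j)" using pQ cQ sQ by (simp add: V_def)
    have XQ: "X \<in> Q" unfolding Q_def by simp
    have "BM (Suc N) (Q, X) = P"
    proof -
      have "Q - {X} = R" unfolding Q_def using XR by blast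
      then show ?thesis unfolding BM_def using PR B0X by simp
    qed
    then show ?thesis using QV XQ by blast
  qed
qed

lemma BM_inj:
  assumes rN: "r \<le> N"
  shows "inj_on (BM (Suc N)) (SIGMA Q:V r N (Suc j). Q)"
proof (rule inj_onI)
  fix u v assume u: "u \<in> (SIGMA Q:V r N (Suc j). Q)" and v: "v \<in> (SIGMA Q:V r N (Suc j). Q)"
    and eq: "BM (Suc N) u = BM (Suc N) v"
  obtain Q X where uQX: "u = (Q, X)" "Q \<in> V r N (Suc j)" "X \<in> Q" using u by blast
  obtain Q' X' where vQX: "v = (Q', X')" "Q' \<in> V r N (Suc j)" "X' \<in> Q'" using v by blast
  define P where "P = insert (insert (Suc N) X) (Q - {X})"
  have PV: "P \<in> V r (Suc N) (Suc j)" unfolding P_def by (rule H3[OF uQX(2,3) rN])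
  have D: "disjoint P" using PV unfolding V_def partition_on_def by blast
  have P': "P = insert (insert (Suc N) X') (Q' - {X'})"
    using eq uQX vQX unfolding P_def BM_def by simp
  have UQ: "\<Union>Q = {1..N}" using uQX(2) unfolding V_def partition_on_def by blast
  have UQ': "\<Union>Q' = {1..N}" using vQX(2) unfolding V_def partition_on_def by blast
  have i0: "insert (Suc N) X \<in> P" unfolding P_def by simp
  have "insert (Suc N) X' \<in> insert (insert (Suc N) X') (Q' - {X'})" by simp
  then have "insert (Suc N) X' \<in> P" using P' by simp
  note i1 = i0 this
  have "insert (Suc N) X = insert (Suc N) X'"
  proof (rule ccontr)
    assume "insert (Suc N) X \<noteq> insert (Suc N) X'"
    then have "insert (Suc N) X \<inter> insert (Suc N) X' = {}" by (rule disjointD[OF D i1])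
    then show False by simp
  qed
  moreover have nX: "Suc N \<notin> X"
  proof
    assume "Suc N \<in> X" then have "Suc N \<in> \<Union>Q" using uQX(3) by blast
    then show False using UQ by simp
  qed
  moreover have nX': "Suc N \<notin> X'"
  proof
    assume "Suc N \<in> X'" then have "Suc N \<in> \<Union>Q'" using vQX(3) by blast
    then show False using UQ' by simp
  qed
  ultimately have XX: "X = X'" by (metis Diff_insert_absorb)
  have n1: "insert (Suc N) X \<notin> Q - {X}"
  proof
    assume "insert (Suc N) X \<in> Q - {X}" then have "Suc N \<in> \<Union>Q" by blast
    then show False using UQ by simp
  qed
  have n2: "insert (Suc N) X \<notin> Q' - {X}"
  proof
    assume "insert (Suc N) X \<in> Q' - {X}" then have "Suc N \<in> \<Union>Q'" by blast
    then show False using UQ' by simp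
  qed
  have "Q - {X} = P - {insert (Suc N) X}" unfolding P_def by (rule Diff_insert_absorb[OF n1, symmetric])
  moreover have "Q' - {X} = P - {insert (Suc N) X}" unfolding P' XX[symmetric] by (rule Diff_insert_absorb[OF n2, symmetric])
  ultimately have "Q - {X} = Q' - {X}" by simp
  then have "Q = Q'" using uQX(3) vQX(3) XX by (metis insert_Diff)
  then show "u = v" using uQX vQX XX by simp
qed


lemma V_rec:
  assumes rN: "r \<le> N"
  shows "card (V r (Suc N) (Suc j)) = Suc j * card (V r N (Suc j)) + card (V r N j)"
proof -
  define A where "A = insert {Suc N} ` V r N j"
  define B where "B = BM (Suc N) ` (SIGMA Q:V r N (Suc j). Q)"
  have eqset: "V r (Suc N) (Suc j) = A \<union> B"
  proof
    show "V r (Suc N) (Suc j) \<subseteq> A \<union> B" unfolding A_def B_def using H4[OF _ rN] by blast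
    show "A \<union> B \<subseteq> V r (Suc N) (Suc j)"
    proof
      fix P assume "P \<in> A \<union> B"
      then show "P \<in> V r (Suc N) (Suc j)"
      proof
        assume "P \<in> A" then show ?thesis unfolding A_def using H2[OF _ rN] by blast
      next
        assume "P \<in> B"
        then obtain Q X where "Q \<in> V r N (Suc j)" "X \<in> Q" "P = BM (Suc N) (Q, X)" unfolding B_def by blast
        then show ?thesis using H3[OF _ _ rN] unfolding BM_def by simp
      qed
    qed
  qed
  have UQ: "\<Union>Q = {1..N}" if "Q \<in> V r N k" for Q k using that unfolding V_def partition_on_def by blast
  have nQ: "{Suc N} \<notin> Q" if "Q \<in> V r N k" for Q k
  proof
    assume "{Suc N} \<in> Q" then have "Suc N \<in> \<Union>Q" by blast
    then show False using UQ[OF that] by simp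
  qed
  have cA: "card A = card (V r N j)"
    unfolding A_def
  proof (rule card_image, rule inj_onI)
    fix Q1 Q2 assume q: "Q1 \<in> V r N j" "Q2 \<in> V r N j" "insert {Suc N} Q1 = insert {Suc N} Q2"
    have "Q1 = insert {Suc N} Q1 - {{Suc N}}" by (rule Diff_insert_absorb[OF nQ[OF q(1)], symmetric])
    also have "\<dots> = insert {Suc N} Q2 - {{Suc N}}" using q(3) by simp
    also have "\<dots> = Q2" by (rule Diff_insert_absorb[OF nQ[OF q(2)]])
    finally show "Q1 = Q2" .
  qed
  have cQ: "card Q = Suc j" if "Q \<in> V r N (Suc j)" for Q using that unfolding V_def by blast
  have finQ: "finite Q" if "Q \<in> V r N (Suc j)" for Q
    using that finite_elements[of "{1..N}" Q] unfolding V_def by auto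
  have cB: "card B = Suc j * card (V r N (Suc j))"
  proof -
    have "card B = card (SIGMA Q:V r N (Suc j). Q)" unfolding B_def by (rule card_image[OF BM_inj[OF rN]])
    also have "\<dots> = (\<Sum>Q\<in>V r N (Suc j). card Q)" by (rule card_SigmaI) (auto simp: finite_V finQ)
    also have "\<dots> = (\<Sum>Q\<in>V r N (Suc j). Suc j)" by (rule sum.cong) (auto simp: cQ)
    finally show ?thesis by simp
  qed
  have disj: "A \<inter> B = {}"
  proof (rule equals0I)
    fix P assume "P \<in> A \<inter> B"
    then have PA: "{Suc N} \<in> P" and "P \<in> B" unfolding A_def by auto
    then obtain Q X where QX: "Q \<in> V r N (Suc j)" "X \<in> Q" "P = insert (insert (Suc N) X) (Q - {X})"
      unfolding B_def BM_def by blast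
    have ne: "X \<noteq> {}" using QX(1,2) unfolding V_def partition_on_def by blast
    have nX: "Suc N \<notin> X"
    proof
      assume "Suc N \<in> X" then have "Suc N \<in> \<Union>Q" using QX(2) by blast
      then show False using UQ[OF QX(1)] by simp
    qed
    have "{Suc N} \<noteq> insert (Suc N) X" using ne nX by blast
    moreover have "{Suc N} \<notin> Q - {X}" using nQ[OF QX(1)] by blast
    ultimately show False using PA QX(3) by blast
  qed
  have "card (V r (Suc N) (Suc j)) = card A + card B"
  proof -
    have fA: "finite A" unfolding A_def using finite_V by blast
    have "finite (SIGMA Q:V r N (Suc j). Q)" using finite_V finQ by blast
    then have fB: "finite B" unfolding B_def by blast
    show ?thesis unfolding eqset by (rule card_Un_disjoint[OF fA fB disj])
  qed
  then show ?thesis using cA cB by simp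
qed

lemma rs_base: "r_stirling r r j = (if j = r then 1 else 0)"
  unfolding rs_V V_base by simp

lemma rs_Suc0: "r_stirling r (Suc N) 0 = 0"
  unfolding rs_V V_Suc0 by simp

lemma rs_rec: "r \<le> N \<Longrightarrow> r_stirling r (Suc N) (Suc j) = Suc j * r_stirling r N (Suc j) + r_stirling r N j"
  unfolding rs_V by (rule V_rec)



lemma rs_cc: "int (r_stirling r (n + r) j) = cc r n j"
proof (induction n arbitrary: j)
  case 0 then show ?case by (simp add: rs_base)
next
  case (Suc n)
  show ?case
  proof (cases j)
    case 0 then show ?thesis by (simp add: rs_Suc0)
  next
    case (Suc j')
    have "r_stirling r (Suc (n + r)) (Suc j') = Suc j' * r_stirling r (n + r) (Suc j') + r_stirling r (n + r) j'"
      by (rule rs_rec) simp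
    then show ?thesis using Suc Suc.IH by (simp add: algebra_simps)
  qed
qed

lemma fub_Lam: "int (r_fubini n r) = Lam (n+r) (\<lambda>x. x^n * ff x r)"
proof -
  have "int (r_fubini n r) = (\<Sum>k=0..n. fact (k + r) * cc r n (k + r))"
    unfolding r_fubini_def by (simp add: rs_cc add.commute)
  also have "\<dots> = (\<Sum>j=0+r..n+r. fact j * cc r n j)"
    by (rule sum.shift_bounds_cl_nat_ivl[symmetric])
  also have "\<dots> = (\<Sum>j\<le>n+r. cc r n j * fact j)"
  proof -
    have u: "{..n+r} = {..<r} \<union> {r..n+r}" by auto
    have "(\<Sum>j\<le>n+r. cc r n j * fact j) = (\<Sum>j<r. cc r n j * fact j) + (\<Sum>j=r..n+r. cc r n j * fact j)"
      unfolding u by (rule sum.union_disjoint) auto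
    also have "(\<Sum>j<r. cc r n j * fact j) = 0" by (simp add: cc_small)
    finally show ?thesis by (simp add: mult.commute)
  qed
  also have "\<dots> = Lam (n+r) (\<lambda>x. x^n * ff x r)"
    by (rule Lam_f[symmetric]) simp
  finally show ?thesis .
qed

lemma fub_cong: "(2::int) ^ K dvd int (r_fubini n r) + (\<Sum>k\<in>{1..K}. 2 ^ (k - 1) * ((- int k) ^ n * ff (- int k) r))"
  unfolding fub_Lam by (rule Lam_cong[OF Dif_f_vanish]) simp

theorem theorem4p7:
  fixes r m n :: nat
  assumes "r \<ge> 2" and "m \<ge> 7" and "n \<ge> m - 1"
  shows "r_fubini (n + 2 ^ (m - 6)) r mod 2 ^ m = r_fubini n r mod 2 ^ m"
proof -
  define s where "s = m - 6"
  have m: "m = s + 6" and s1: "s \<ge> 1" and n1: "n + 1 \<ge> s + 6" using assms unfolding s_def by auto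
  define S where "S = (\<lambda>q. (\<Sum>k\<in>{1..m}. 2 ^ (k - 1) * ((- int k) ^ q * ff (- int k) r)))"
  have c1: "(2::int) ^ m dvd int (r_fubini (n + 2^s) r) + S (n + 2^s)" unfolding S_def by (rule fub_cong)
  have c2: "(2::int) ^ m dvd int (r_fubini n r) + S n" unfolding S_def by (rule fub_cong)
  have c3: "(2::int) ^ m dvd S (n + 2^s) - S n"
  proof -
    have "S (n + 2^s) - S n = (\<Sum>k\<in>{1..m}. 2 ^ (k - 1) * ((- int k) ^ (n + 2^s) * ff (- int k) r - (- int k) ^ n * ff (- int k) r))"
      unfolding S_def by (simp add: sum_subtractf[symmetric] right_diff_distrib)
    also have "(2::int) ^ m dvd \<dots>"
      unfolding m by (intro dvd_sum term_dvd assms(1) s1 n1) auto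
    finally show ?thesis .
  qed
  have "(2::int) ^ m dvd (int (r_fubini (n + 2^s) r) + S (n + 2^s)) - (int (r_fubini n r) + S n) - (S (n + 2^s) - S n)"
    by (rule dvd_diff[OF dvd_diff[OF c1 c2] c3])
  then have "(2::int) ^ m dvd int (r_fubini (n + 2^s) r) - int (r_fubini n r)"
    by (simp add: algebra_simps)
  then have "int (r_fubini (n + 2^s) r) mod 2 ^ m = int (r_fubini n r) mod 2 ^ m"
    by (simp add: mod_eq_dvd_iff)
  then have "int (r_fubini (n + 2^s) r mod 2 ^ m) = int (r_fubini n r mod 2 ^ m)"
    by (simp add: of_nat_mod)
  then show ?thesis unfolding s_def by simp
qed

end
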